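(* Let $n$ be a positive integer. Then for all complex numbers $x$ and $y$ with $y\neq -1$, $$\sum_{r=2}^{n+1}\frac{(-1)^rB_{r}(x)}{r}\binom{n-1}{r-2}\binom{y}{r-1}=\sum_{r=1}^{n}\binom{n-1}{r-1}\binom{y+n-r}{n}\left(\frac{B_{r+1}(-x)}{r+1}+\frac{B_{r}(-x)}{r}\right)+\frac{1}{y+1}\binom{y+n}{n+1}.$$
   Context: The Bernoulli polynomials $B_n(x)$ are defined by $\sum_{n=0}^\infty\frac{B_n(x)}{n!}t^n=\frac{te^{xt}}{e^t-1}$. For a complex number $y$ and an integer $k\ge0$, $\binom{y}{k}=\frac{y(y-1)\cdots(y-k+1)}{k!}$; for ordinary integer binomial coefficients $\binom{a}{b}$ with $a\ge 0$ and $b<0$ or $b>a$, $\binom{a}{b}=0$. *)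

theory Defs
  imports "HOL-Analysis.Analysis" "HOL-Computational_Algebra.Formal_Power_Series"
begin

definition bernpoly :: "nat \<Rightarrow> complex \<Rightarrow> complex" where
  "bernpoly n x = fact n * fps_nth ((fps_X * fps_exp x) / (fps_exp 1 - 1)) n"

end

theory Submission
  imports Defs
begin

definition GG :: "complex \<Rightarrow> complex fps" where
  "GG x = (fps_X * fps_exp x) / (fps_exp 1 - 1)"

lemma D_ne: "(fps_exp 1 - 1 :: complex fps) \<noteq> 0"
proof
  assume "(fps_exp 1 - 1 :: complex fps) = 0"
  hence "fps_nth (fps_exp 1 - 1 :: complex fps) 1 = 0" by simp
  thus False by simp
qed

lemma GG_mult: "GG x * (fps_exp 1 - 1) = fps_X * fps_exp x"
proof -
  have s1: "subdegree (fps_exp 1 - 1 :: complex fps) = 1"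
    by (rule subdegreeI) auto
  have ne: "fps_X * fps_exp x \<noteq> (0::complex fps)" by simp
  have s2: "subdegree (fps_X * fps_exp x :: complex fps) = 1"
    by (rule subdegreeI) auto
  have "(fps_exp 1 - 1 :: complex fps) dvd fps_X * fps_exp x"
    using fps_dvd_iff[OF D_ne ne] s1 s2 by simp
  thus ?thesis unfolding GG_def by simp
qed

lemma bernpoly_GG: "bernpoly n x = fact n * fps_nth (GG x) n"
  by (simp add: bernpoly_def GG_def)

lemma GG_add: "GG (a + b) = GG a * fps_exp b"
proof -
  have "GG (a+b) * (fps_exp 1 - 1) = fps_X * (fps_exp a * fps_exp b)"
    by (simp only: GG_mult fps_exp_add_mult)
  also have "\<dots> = (GG a * (fps_exp 1 - 1)) * fps_exp b"
    by (simp only: GG_mult mult.assoc)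
  also have "\<dots> = (GG a * fps_exp b) * (fps_exp 1 - 1)"
    by (simp only: mult_ac)
  finally have "GG (a+b) * (fps_exp 1 - 1) = (GG a * fps_exp b) * (fps_exp 1 - 1)" .
  thus ?thesis using D_ne by simp
qed

lemma bernpoly_add: "bernpoly r (a + b) = (\<Sum>k\<le>r. of_nat (r choose k) * bernpoly k a * b ^ (r - k))"
proof -
  have "bernpoly r (a+b) = fact r * (\<Sum>k=0..r. fps_nth (GG a) k * (b^(r-k) / fact (r-k)))"
    by (simp add: bernpoly_GG GG_add fps_mult_nth)
  also have "\<dots> = (\<Sum>k\<le>r. of_nat (r choose k) * bernpoly k a * b ^ (r - k))"
    unfolding sum_distrib_left atMost_atLeast0
  proof (rule sum.cong[OF refl])
    fix k assume "k \<in> {0..r}"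
    hence k: "k \<le> r" by simp
    have h: "(fact k * fact (r-k) * (r choose k) :: nat) = fact r" by (rule binomial_fact_lemma[OF k])
    have "(of_nat (fact k * fact (r-k) * (r choose k)) :: complex) = of_nat (fact r)" by (simp only: h)
    hence "fact r = (of_nat (r choose k) * fact k * fact (r-k) :: complex)"
      by (simp add: mult_ac)
    thus "fact r * (fps_nth (GG a) k * (b ^ (r - k) / fact (r - k))) =
         of_nat (r choose k) * bernpoly k a * b ^ (r - k)"
      by (simp add: bernpoly_GG field_simps)
  qed
  finally show ?thesis .
qed

lemma Xc: "(fps_X :: complex fps) oo (- fps_X) = - fps_X"
  by (simp add: fps_eq_iff fps_X_fps_compose)

lemma GG_refl: "(GG (1 - x) oo (- fps_X)) = GG x"
proof -
  have c0: "fps_nth (- fps_X :: complex fps) 0 = 0" by simp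
  have "(GG (1 - x) * (fps_exp 1 - 1)) oo (- fps_X) = (fps_X * fps_exp (1-x)) oo (-fps_X)"
    by (simp add: GG_mult)
  hence "(GG (1 - x) oo (- fps_X)) * (fps_exp (-1) - 1) = (- fps_X) * fps_exp (x - 1)"
    by (simp add: fps_compose_mult_distrib[OF c0] fps_compose_sub_distrib Xc)
  also have "\<dots> = GG x * (fps_exp (-1) - 1)"
  proof -
    have e: "fps_exp (x - 1) = fps_exp x * fps_exp (-1 :: complex)"
      by (metis diff_conv_add_uminus fps_exp_add_mult)
    have e2: "fps_exp (-1) * fps_exp 1 = (1 :: complex fps)"
      by (metis fps_exp_add_mult fps_exp_0 add.left_inverse)
    have "- (GG x * (fps_exp 1 - 1)) * fps_exp (-1) = GG x * (fps_exp (-1) - 1) - GG x * (fps_exp (-1) * fps_exp 1 - 1)"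
      by (simp add: algebra_simps)
    hence "GG x * (fps_exp (-1) - 1) = - (GG x * (fps_exp 1 - 1)) * fps_exp (-1)"
      by (simp only: e2) simp
    also have "\<dots> = - (fps_X * (fps_exp x * fps_exp (-1)))"
      by (simp only: GG_mult mult.assoc) simp
    finally show ?thesis by (simp only: e) simp
  qed
  finally have "(GG (1 - x) oo (- fps_X)) * (fps_exp (-1) - 1) = GG x * (fps_exp (-1) - 1)" .
  moreover have "(fps_exp (-1) - 1 :: complex fps) \<noteq> 0"
  proof
    assume "(fps_exp (-1) - 1 :: complex fps) = 0"
    hence "fps_nth (fps_exp (-1) - 1 :: complex fps) 1 = 0" by simp
    thus False by simp
  qed
  ultimately show ?thesis by simp
qed

lemma bernpoly_refl: "(-1)^r * bernpoly r x = bernpoly r (1 - x)"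
proof -
  have "fps_nth (GG x) r = (-1)^r * fps_nth (GG (1 - x)) r"
    using GG_refl[of x] by (metis fps_compose_uminus' fps_nth_Abs_fps)
  thus ?thesis by (simp add: bernpoly_GG)
qed

lemma bernpoly_0: "bernpoly 0 x = 1"
proof -
  have "fps_nth (GG x * (fps_exp 1 - 1)) 1 = fps_nth (fps_X * fps_exp x) 1"
    by (simp only: GG_mult)
  hence "fps_nth (GG x) 0 = 1"
    by (simp add: fps_mult_nth)
  thus ?thesis by (simp add: bernpoly_GG)
qed




lemma VL:
  fixes Y :: complex
  shows "(\<Sum>i\<le>a. of_nat (a choose i) * (Y gchoose (i + c))) = (Y + of_nat a) gchoose (a + c)"
proof -
  have "(Y + of_nat a) gchoose (a + c) = (\<Sum>k=0..a+c. (of_nat a gchoose k) * (Y gchoose (a + c - k)))"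
    using gbinomial_Vandermonde[of "of_nat a" Y "a+c"] by (simp add: add.commute)
  also have "\<dots> = (\<Sum>k=0..a. (of_nat a gchoose k) * (Y gchoose (a + c - k)))"
  proof (rule sum.mono_neutral_right)
    show "\<forall>i\<in>{0..a + c} - {0..a}. (of_nat a gchoose i) * (Y gchoose (a + c - i)) = 0"
      by (auto simp: binomial_gbinomial[symmetric])
  qed auto
  also have "\<dots> = (\<Sum>k=0..a. (of_nat a gchoose (a - k)) * (Y gchoose (a + c - (a - k))))"
    by (subst sum.atLeastAtMost_rev) simp
  also have "\<dots> = (\<Sum>i\<le>a. of_nat (a choose i) * (Y gchoose (i + c)))"
    unfolding atMost_atLeast0
    by (rule sum.cong[OF refl]) (auto simp: binomial_gbinomial[symmetric] binomial_symmetric[symmetric] add.commute)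
  finally show ?thesis ..
qed



lemma VV:
  fixes y :: complex
  shows "(\<Sum>s\<le>m. of_nat (s choose t) * of_nat (m choose s) * (y gchoose (s+1)))
       = of_nat (m choose t) * ((y + of_nat m - of_nat t) gchoose (m+1))"
proof (cases "t \<le> m")
  case False
  hence "\<forall>s\<in>{..m}. (s choose t) = 0" by auto
  hence "(\<Sum>s\<le>m. of_nat (s choose t) * of_nat (m choose s) * (y gchoose (s+1))) = (0::complex)"
    by (intro sum.neutral) simp
  thus ?thesis using False by simp
next
  case True
  have "(\<Sum>s\<le>m. of_nat (s choose t) * of_nat (m choose s) * (y gchoose (s+1)))
      = (\<Sum>s=t..m. of_nat (m choose t) * (of_nat ((m - t) choose (s - t)) * (y gchoose (s+1))))"
  proof -
    have "(\<Sum>s\<le>m. of_nat (s choose t) * of_nat (m choose s) * (y gchoose (s+1)))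
        = (\<Sum>s=t..m. of_nat (s choose t) * of_nat (m choose s) * (y gchoose (s+1)))"
      unfolding atMost_atLeast0
      by (rule sum.mono_neutral_right) auto
    also have "\<dots> = (\<Sum>s=t..m. of_nat (m choose t) * (of_nat ((m - t) choose (s - t)) * (y gchoose (s+1))))"
    proof (rule sum.cong[OF refl])
      fix s assume "s \<in> {t..m}"
      hence "t \<le> s" "s \<le> m" by auto
      hence "(m choose s) * (s choose t) = (m choose t) * ((m - t) choose (s - t))"
        by (rule choose_mult)
      hence "(of_nat (s choose t) * of_nat (m choose s) :: complex) = of_nat (m choose t) * of_nat ((m - t) choose (s - t))"
        by (metis mult.commute of_nat_mult)
      thus "of_nat (s choose t) * of_nat (m choose s) * (y gchoose (s+1)) =
            of_nat (m choose t) * (of_nat ((m - t) choose (s - t)) * (y gchoose (s+1)))" by simp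
    qed
    finally show ?thesis .
  qed
  also have "\<dots> = of_nat (m choose t) * (\<Sum>s=0+t..(m-t)+t. of_nat ((m - t) choose (s - t)) * (y gchoose (s+1)))"
    using True by (simp add: sum_distrib_left)
  also have "(\<Sum>s=0+t..(m-t)+t. of_nat ((m - t) choose (s - t)) * (y gchoose (s+1)))
     = (\<Sum>i\<le>m-t. of_nat ((m - t) choose i) * (y gchoose (i + (t+1))))"
    unfolding sum.shift_bounds_cl_nat_ivl atMost_atLeast0 by (simp add: add.commute add.left_commute)
  also have "\<dots> = (y + of_nat (m - t)) gchoose (m - t + (t+1))" by (rule VL)
  also have "\<dots> = (y + of_nat m - of_nat t) gchoose (m+1)" using True by (simp add: of_nat_diff add_diff_eq)
  finally show ?thesis .
qed

definition EE :: "nat \<Rightarrow> complex \<Rightarrow> nat \<Rightarrow> complex" where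
  "EE m y j = (if j = 0 then 0 else of_nat (m choose (j-1)) * ((y + of_nat (Suc m) - of_nat j) gchoose (Suc m)))"

lemma VV_EE: "(\<Sum>s\<le>m. of_nat (s choose t) * of_nat (m choose s) * (y gchoose (s+1))) = EE m y (Suc t)"
  unfolding VV EE_def by (simp add: add_diff_eq)

lemma SS: "(\<Sum>s\<le>m. of_nat (Suc s choose j) * of_nat (m choose s) * (y gchoose (s+1))) = EE m y j + EE m y (Suc j)"
proof (cases j)
  case 0
  have "(\<Sum>s\<le>m. of_nat (Suc s choose j) * of_nat (m choose s) * (y gchoose (s+1)))
     = (\<Sum>s\<le>m. of_nat (s choose 0) * of_nat (m choose s) * (y gchoose (s+1)))" using 0 by simp
  also have "\<dots> = EE m y (Suc 0)" by (rule VV_EE)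
  finally show ?thesis using 0 by (simp add: EE_def)
next
  case (Suc i)
  have "(\<Sum>s\<le>m. of_nat (Suc s choose j) * of_nat (m choose s) * (y gchoose (s+1)))
      = (\<Sum>s\<le>m. of_nat (s choose i) * of_nat (m choose s) * (y gchoose (s+1)))
        + (\<Sum>s\<le>m. of_nat (s choose Suc i) * of_nat (m choose s) * (y gchoose (s+1)))"
    unfolding Suc by (simp add: sum.distrib[symmetric] algebra_simps)
  thus ?thesis unfolding VV_EE Suc .
qed

lemma CK:
  assumes "k \<ge> 1"
  shows "(\<Sum>s\<le>m. of_nat (Suc (Suc s) choose k) * of_nat (m choose s) * (y gchoose (s+1)) / of_nat (Suc (Suc s)))
       = (EE m y (k-1) + EE m y k) / of_nat k"
proof -
  obtain j where k: "k = Suc j" using assms by (cases k) auto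
  have "(\<Sum>s\<le>m. of_nat (Suc (Suc s) choose k) * of_nat (m choose s) * (y gchoose (s+1)) / of_nat (Suc (Suc s)))
      = (\<Sum>s\<le>m. of_nat (Suc s choose j) * of_nat (m choose s) * (y gchoose (s+1))) / of_nat k"
    unfolding sum_divide_distrib
  proof (rule sum.cong[OF refl])
    fix s
    have h: "Suc (Suc s) * (Suc s choose j) = (Suc (Suc s) choose Suc j) * Suc j"
      by (rule Suc_times_binomial_eq)
    have h2: "(of_nat (Suc (Suc s) choose k) :: complex) * of_nat k = of_nat (Suc s choose j) * of_nat (Suc (Suc s))"
      unfolding k of_nat_mult[symmetric] h[symmetric] by (simp only: mult.commute)
    have e: "(of_nat (Suc (Suc s) choose k) :: complex) / of_nat (Suc (Suc s)) = of_nat (Suc s choose j) / of_nat k"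
      by (subst frac_eq_eq) (use h2 k in \<open>simp_all del: of_nat_Suc\<close>)
    have r1: "\<And>a b c d :: complex. a * b * c / d = (a / d) * (b * c)" by simp
    show "of_nat (Suc (Suc s) choose k) * of_nat (m choose s) * (y gchoose (s+1)) / of_nat (Suc (Suc s))
        = of_nat (Suc s choose j) * of_nat (m choose s) * (y gchoose (s+1)) / of_nat k"
      by (simp only: r1 e)
  qed
  also have "\<dots> = (EE m y (k-1) + EE m y k) / of_nat k" unfolding SS k by simp
  finally show ?thesis .
qed

lemma C0:
  fixes y :: complex
  assumes "y \<noteq> -1"
  shows "(\<Sum>s\<le>m. of_nat (m choose s) * (y gchoose (s+1)) / of_nat (Suc (Suc s)))
       = 1 / (y + 1) * ((y + of_nat (Suc m)) gchoose (Suc m + 1))"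
proof -
  have y1: "y + 1 \<noteq> 0" using assms eq_neg_iff_add_eq_0[of y 1] by simp
  have "(\<Sum>s\<le>m. of_nat (m choose s) * (y gchoose (s+1)) / of_nat (Suc (Suc s)))
      = 1 / (y + 1) * (\<Sum>s\<le>m. of_nat (m choose s) * ((y+1) gchoose (s+2)))"
    unfolding sum_distrib_left
  proof (rule sum.cong[OF refl])
    fix s
    have "of_nat (Suc (Suc s)) * ((y+1) gchoose Suc (Suc s)) = (y+1) * ((y + 1 - 1) gchoose (Suc s))"
      by (rule gbinomial_absorption)
    hence "(y gchoose (s+1)) / of_nat (Suc (Suc s)) = ((y+1) gchoose (s+2)) / (y+1)"
      using y1 by (simp add: field_simps del: of_nat_Suc)
    hence ee: "(y gchoose (s+1)) / of_nat (Suc (Suc s)) = ((y+1) gchoose (s+2)) / (y+1)" .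
    have "of_nat (m choose s) * (y gchoose (s+1)) / of_nat (Suc (Suc s))
        = of_nat (m choose s) * ((y gchoose (s+1)) / of_nat (Suc (Suc s)))"
      by (rule times_divide_eq_right[symmetric])
    also have "\<dots> = of_nat (m choose s) * (((y+1) gchoose (s+2)) / (y+1))" by (simp only: ee)
    also have "\<dots> = 1 / (y + 1) * (of_nat (m choose s) * ((y+1) gchoose (s+2)))" by simp
    finally show "of_nat (m choose s) * (y gchoose (s+1)) / of_nat (Suc (Suc s)) =
          1 / (y + 1) * (of_nat (m choose s) * ((y+1) gchoose (s+2)))" .
  qed
  also have "(\<Sum>s\<le>m. of_nat (m choose s) * ((y+1) gchoose (s+2))) = (y + 1 + of_nat m) gchoose (m + 2)"
    by (rule VL)
  also have "\<dots> = (y + of_nat (Suc m)) gchoose (Suc m + 1)" by (simp add: add_ac)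
  finally show ?thesis .
qed



theorem mainTheorem2:
  fixes n :: nat and x y :: complex
  assumes "n \<ge> 1" and "y \<noteq> -1"
  shows "(\<Sum>r=2..n+1. (-1)^r * bernpoly r x / of_nat r
            * of_nat ((n - 1) choose (r - 2)) * (y gchoose (r - 1)))
       = (\<Sum>r=1..n. of_nat ((n - 1) choose (r - 1)) * ((y + of_nat n - of_nat r) gchoose n)
            * (bernpoly (r + 1) (-x) / of_nat (r + 1) + bernpoly r (-x) / of_nat r))
         + 1 / (y + 1) * ((y + of_nat n) gchoose (n + 1))"
proof -
  obtain m where n: "n = Suc m" using assms(1) by (cases n) auto
  define \<beta> where "\<beta> k = bernpoly k (-x)" for k
  define K where "K = 1 / (y + 1) * ((y + of_nat (Suc m)) gchoose (Suc m + 1))"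
  define N where "N = Suc (Suc m)"
  define c where "c k = (\<Sum>s\<le>m. of_nat (Suc (Suc s) choose k) * of_nat (m choose s) * (y gchoose (s+1)) / of_nat (Suc (Suc s)))" for k
  have L1: "(-1)^(Suc (Suc s)) * bernpoly (Suc (Suc s)) x = (\<Sum>k\<le>N. of_nat (Suc (Suc s) choose k) * \<beta> k)"
    if "s \<le> m" for s
  proof -
    have "(-1)^(Suc (Suc s)) * bernpoly (Suc (Suc s)) x = bernpoly (Suc (Suc s)) (-x + 1)"
      using bernpoly_refl[of "Suc (Suc s)" x] by simp
    also have "\<dots> = (\<Sum>k\<le>Suc (Suc s). of_nat (Suc (Suc s) choose k) * \<beta> k)"
      unfolding bernpoly_add \<beta>_def by simp
    also have "\<dots> = (\<Sum>k\<le>N. of_nat (Suc (Suc s) choose k) * \<beta> k)"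
      by (rule sum.mono_neutral_left) (use that in \<open>auto simp: N_def\<close>)
    finally show ?thesis .
  qed
  have "(\<Sum>r=2..n+1. (-1)^r * bernpoly r x / of_nat r
            * of_nat ((n - 1) choose (r - 2)) * (y gchoose (r - 1)))
      = (\<Sum>s=0..m. (-1)^(Suc (Suc s)) * bernpoly (Suc (Suc s)) x / of_nat (Suc (Suc s))
            * of_nat (m choose s) * (y gchoose (s + 1)))"
  proof -
    define f where "f r = (-1)^r * bernpoly r x / of_nat r
            * of_nat ((n - 1) choose (r - 2)) * (y gchoose (r - 1))" for r
    have e: "{2..n+1} = {0+2..m+2}" unfolding n by simp
    have "sum f {2..n+1} = sum f {0+2..m+2}" by (simp only: e)
    also have "\<dots> = sum (\<lambda>s. f (s+2)) {0..m}" by (rule sum.shift_bounds_cl_nat_ivl)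
    finally show ?thesis unfolding f_def by (simp add: n)
  qed
  also have "\<dots> = (\<Sum>s\<le>m. \<Sum>k\<le>N. \<beta> k * (of_nat (Suc (Suc s) choose k) * of_nat (m choose s) * (y gchoose (s+1)) / of_nat (Suc (Suc s))))"
    unfolding atMost_atLeast0
  proof (rule sum.cong[OF refl])
    fix s assume "s \<in> {0..m}"
    hence "s \<le> m" by simp
    thus "(-1)^(Suc (Suc s)) * bernpoly (Suc (Suc s)) x / of_nat (Suc (Suc s))
            * of_nat (m choose s) * (y gchoose (s + 1))
        = (\<Sum>k\<in>{0..N}. \<beta> k * (of_nat (Suc (Suc s) choose k) * of_nat (m choose s) * (y gchoose (s+1)) / of_nat (Suc (Suc s))))"
      unfolding L1[OF \<open>s \<le> m\<close>, folded atMost_atLeast0] atMost_atLeast0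
      by (simp add: sum_distrib_right sum_distrib_left sum_divide_distrib mult_ac)
  qed
  also have "\<dots> = (\<Sum>k\<le>N. \<beta> k * c k)"
    unfolding c_def sum_distrib_left by (rule sum.swap)
  also have "\<dots> = (\<Sum>k\<le>N. \<beta> k * ((if k = 0 then K else 0) + (EE m y (k-1) + EE m y k) / of_nat k))"
  proof (rule sum.cong[OF refl])
    fix k
    have "c k = (if k = 0 then K else 0) + (EE m y (k-1) + EE m y k) / of_nat k"
    proof (cases "k = 0")
      case True
      thus ?thesis unfolding c_def K_def using C0[OF assms(2), of m] by simp
    next
      case False
      thus ?thesis unfolding c_def using CK[of k m y] by simp
    qed
    thus "\<beta> k * c k = \<beta> k * ((if k = 0 then K else 0) + (EE m y (k-1) + EE m y k) / of_nat k)" by simp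
  qed
  also have "\<dots> = K + ((\<Sum>k\<le>N. \<beta> k * EE m y (k-1) / of_nat k) + (\<Sum>k\<le>N. \<beta> k * EE m y k / of_nat k))"
  proof -
    have "(\<Sum>k\<le>N. \<beta> k * ((if k = 0 then K else 0) + (EE m y (k-1) + EE m y k) / of_nat k))
       = (\<Sum>k\<le>N. (if k = 0 then \<beta> k * K else 0)) + ((\<Sum>k\<le>N. \<beta> k * EE m y (k-1) / of_nat k) + (\<Sum>k\<le>N. \<beta> k * EE m y k / of_nat k))"
    proof -
      have "(\<Sum>k\<le>N. \<beta> k * ((if k = 0 then K else 0) + (EE m y (k-1) + EE m y k) / of_nat k))
         = (\<Sum>k\<le>N. (if k = 0 then \<beta> k * K else 0) + (\<beta> k * EE m y (k-1) / of_nat k + \<beta> k * EE m y k / of_nat k))"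
        by (rule sum.cong[OF refl]) (simp add: ring_distribs add_divide_distrib)
      thus ?thesis by (simp only: sum.distrib)
    qed
    also have "(\<Sum>k\<le>N. (if k = 0 then \<beta> k * K else 0)) = K"
      by (simp add: sum.delta \<beta>_def bernpoly_0)
    finally show ?thesis .
  qed
  also have "(\<Sum>k\<le>N. \<beta> k * EE m y (k-1) / of_nat k) = (\<Sum>i\<le>m. EE m y (Suc i) * (\<beta> (Suc i + 1) / of_nat (Suc i + 1)))"
  proof -
    define g where "g k = \<beta> k * EE m y (k-1) / of_nat k" for k
    have "(\<Sum>k\<le>N. g k) = g 0 + (g (Suc 0) + (\<Sum>i\<le>m. g (Suc (Suc i))))"
      unfolding N_def by (simp only: sum.atMost_Suc_shift)
    also have "\<dots> = (\<Sum>i\<le>m. g (Suc (Suc i)))" by (simp add: g_def EE_def)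
    finally show ?thesis unfolding g_def by (simp add: mult_ac)
  qed
  also have "(\<Sum>k\<le>N. \<beta> k * EE m y k / of_nat k) = (\<Sum>i\<le>m. EE m y (Suc i) * (\<beta> (Suc i) / of_nat (Suc i)))"
  proof -
    define g where "g k = \<beta> k * EE m y k / of_nat k" for k
    have "(\<Sum>k\<le>N. g k) = g 0 + ((\<Sum>i\<le>m. g (Suc i)) + g (Suc (Suc m)))"
      unfolding N_def by (subst sum.atMost_Suc_shift, subst sum.atMost_Suc, rule refl)
    also have "\<dots> = (\<Sum>i\<le>m. g (Suc i))" by (simp add: g_def EE_def)
    finally show ?thesis unfolding g_def by (simp add: mult_ac)
  qed
  also have "K + ((\<Sum>i\<le>m. EE m y (Suc i) * (\<beta> (Suc i + 1) / of_nat (Suc i + 1)))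
         + (\<Sum>i\<le>m. EE m y (Suc i) * (\<beta> (Suc i) / of_nat (Suc i))))
     = (\<Sum>r=1..n. of_nat ((n - 1) choose (r - 1)) * ((y + of_nat n - of_nat r) gchoose n)
            * (bernpoly (r + 1) (-x) / of_nat (r + 1) + bernpoly r (-x) / of_nat r))
         + 1 / (y + 1) * ((y + of_nat n) gchoose (n + 1))"
  proof -
    have "(\<Sum>r=1..n. of_nat ((n - 1) choose (r - 1)) * ((y + of_nat n - of_nat r) gchoose n)
            * (bernpoly (r + 1) (-x) / of_nat (r + 1) + bernpoly r (-x) / of_nat r))
        = (\<Sum>i=0..m. EE m y (Suc i) * (\<beta> (Suc i + 1) / of_nat (Suc i + 1) + \<beta> (Suc i) / of_nat (Suc i)))"
      unfolding n One_nat_def sum.shift_bounds_cl_Suc_ivl by (simp add: EE_def \<beta>_def del: of_nat_Suc)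
    thus ?thesis unfolding K_def n atMost_atLeast0 by (simp add: sum.distrib algebra_simps)
  qed
  finally show ?thesis .
qed


end
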